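(* Let $(\Lambda,d)$ be a $k$-graph and let $p\in\mathbb{N}^k$. For each $n\in\mathbb{N}^k$ with $n\le p$ and all vertices $v,w$ of $p\Lambda$ (i.e. $v,w\in\Lambda^p$), there is at most one path $\lambda$ in $p\Lambda$ with $d_p(\lambda)=n$, $r_p(\lambda)=v$ and $s_p(\lambda)=w$.
   Context: A $k$-graph is a pair $(\Lambda,d)$ where $\Lambda$ is a countable category and $d:\Lambda\to\mathbb{N}^k$ is a functor satisfying the factorisation property: if $d(\lambda)=m+n$ then there are unique $\mu\in d^{-1}(m)$, $\nu\in d^{-1}(n)$ with $\lambda=\mu\nu$. $\Lambda^n:=d^{-1}(n)$. For $d(\lambda)=n$ and $l\le m\le n$, $\lambda(l,m)$ is the unique path of degree $m-l$ with $\lambda=\lambda(0,l)\lambda(l,m)\lambda(m,n)$. The dual $k$-graph $p\Lambda$ has paths $\{\lambda\in\Lambda:d(\lambda)\ge p\}$, vertices $\Lambda^p$, range $r_p(\lambda)=\lambda(0,p)$, source $s_p(\lambda)=\lambda(d(\lambda)-p,d(\lambda))$, composition $\lambda\circ_p\mu=\lambda\,\mu(p,d(\mu))$ when $s_p(\lambda)=r_p(\mu)$, and degree $d_p(\lambda)=d(\lambda)-p$. *)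

theory Defs
  imports Main "HOL-Library.Countable_Set"
begin

text \<open>Elements of N^k are represented as functions nat => nat vanishing from index k on;
  the order on them is the pointwise order (le_fun).\<close>
definition in_Nk :: "nat \<Rightarrow> (nat \<Rightarrow> nat) \<Rightarrow> bool" where
  "in_Nk k m \<longleftrightarrow> (\<forall>i\<ge>k. m i = 0)"

text \<open>A k-graph, presented as a (single-sorted) countable small category: Lam is the set of
  morphisms (paths), vertices/objects are identified with identity morphisms, r and s give
  the range and source (identity) morphisms, cmp lam mu is the composite lam mu (meaningful
  when s lam = r mu), and d is the degree functor into N^k.\<close>
definition kgraph ::
  "nat \<Rightarrow> 'a set \<Rightarrow> ('a \<Rightarrow> 'a) \<Rightarrow> ('a \<Rightarrow> 'a) \<Rightarrow> ('a \<Rightarrow> 'a \<Rightarrow> 'a)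
     \<Rightarrow> ('a \<Rightarrow> nat \<Rightarrow> nat) \<Rightarrow> bool" where
  "kgraph k Lam r s cmp d \<longleftrightarrow>
     countable Lam \<and>
     (\<forall>x\<in>Lam. r x \<in> Lam \<and> s x \<in> Lam) \<and>
     (\<forall>x\<in>Lam. r (r x) = r x \<and> s (r x) = r x \<and> r (s x) = s x \<and> s (s x) = s x) \<and>
     (\<forall>x\<in>Lam. cmp (r x) x = x \<and> cmp x (s x) = x) \<and>
     (\<forall>x\<in>Lam. \<forall>y\<in>Lam. s x = r y \<longrightarrow>
        cmp x y \<in> Lam \<and> r (cmp x y) = r x \<and> s (cmp x y) = s y) \<and>
     (\<forall>x\<in>Lam. \<forall>y\<in>Lam. \<forall>z\<in>Lam. s x = r y \<and> s y = r z \<longrightarrow>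
        cmp (cmp x y) z = cmp x (cmp y z)) \<and>
     (\<forall>x\<in>Lam. in_Nk k (d x)) \<and>
     (\<forall>x\<in>Lam. d (r x) = (\<lambda>i. 0) \<and> d (s x) = (\<lambda>i. 0)) \<and>
     (\<forall>x\<in>Lam. \<forall>y\<in>Lam. s x = r y \<longrightarrow> d (cmp x y) = (\<lambda>i. d x i + d y i)) \<and>
     (\<forall>x\<in>Lam. \<forall>m n. d x = (\<lambda>i. m i + n i) \<longrightarrow>
        (\<exists>!(mu, nu). mu \<in> Lam \<and> nu \<in> Lam \<and> d mu = m \<and> d nu = n \<and>
                      s mu = r nu \<and> x = cmp mu nu))"

definition seg ::
  "'a set \<Rightarrow> ('a \<Rightarrow> 'a) \<Rightarrow> ('a \<Rightarrow> 'a) \<Rightarrow> ('a \<Rightarrow> 'a \<Rightarrow> 'a) \<Rightarrow> ('a \<Rightarrow> nat \<Rightarrow> nat)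
     \<Rightarrow> 'a \<Rightarrow> (nat \<Rightarrow> nat) \<Rightarrow> (nat \<Rightarrow> nat) \<Rightarrow> 'a" where
  "seg Lam r s cmp d x l m = (THE nu. nu \<in> Lam \<and> d nu = (\<lambda>i. m i - l i) \<and>
     (\<exists>a b. a \<in> Lam \<and> b \<in> Lam \<and> d a = l \<and> d b = (\<lambda>i. d x i - m i) \<and>
            s a = r nu \<and> s nu = r b \<and> x = cmp a (cmp nu b)))"

definition dual_paths :: "'a set \<Rightarrow> ('a \<Rightarrow> nat \<Rightarrow> nat) \<Rightarrow> (nat \<Rightarrow> nat) \<Rightarrow> 'a set" where
  "dual_paths Lam d p = {x \<in> Lam. p \<le> d x}"

definition dual_vertices :: "'a set \<Rightarrow> ('a \<Rightarrow> nat \<Rightarrow> nat) \<Rightarrow> (nat \<Rightarrow> nat) \<Rightarrow> 'a set" where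
  "dual_vertices Lam d p = {x \<in> Lam. d x = p}"

definition dual_r ::
  "'a set \<Rightarrow> ('a \<Rightarrow> 'a) \<Rightarrow> ('a \<Rightarrow> 'a) \<Rightarrow> ('a \<Rightarrow> 'a \<Rightarrow> 'a) \<Rightarrow> ('a \<Rightarrow> nat \<Rightarrow> nat)
     \<Rightarrow> (nat \<Rightarrow> nat) \<Rightarrow> 'a \<Rightarrow> 'a" where
  "dual_r Lam r s cmp d p x = seg Lam r s cmp d x (\<lambda>i. 0) p"

definition dual_s ::
  "'a set \<Rightarrow> ('a \<Rightarrow> 'a) \<Rightarrow> ('a \<Rightarrow> 'a) \<Rightarrow> ('a \<Rightarrow> 'a \<Rightarrow> 'a) \<Rightarrow> ('a \<Rightarrow> nat \<Rightarrow> nat)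
     \<Rightarrow> (nat \<Rightarrow> nat) \<Rightarrow> 'a \<Rightarrow> 'a" where
  "dual_s Lam r s cmp d p x = seg Lam r s cmp d x (\<lambda>i. d x i - p i) (d x)"

definition dual_d :: "('a \<Rightarrow> nat \<Rightarrow> nat) \<Rightarrow> (nat \<Rightarrow> nat) \<Rightarrow> 'a \<Rightarrow> nat \<Rightarrow> nat" where
  "dual_d d p x = (\<lambda>i. d x i - p i)"

end

theory Submission
  imports Defs
begin

lemma le_split: "(l::nat\<Rightarrow>nat) \<le> m \<Longrightarrow> m \<le> D \<Longrightarrow> D = (\<lambda>i. l i + (D i - l i))"
proof (rule ext)
  fix i assume "l \<le> m" "m \<le> D"
  then have "l i \<le> D i" by (meson le_fun_def order_trans)
  then show "D i = l i + (D i - l i)" by simp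
qed

lemma dx_split: "(p::nat\<Rightarrow>nat) \<le> D \<Longrightarrow> (\<lambda>i. D i - p i) = n \<Longrightarrow> D = (\<lambda>i. p i + n i)"
proof (rule ext)
  fix i assume a: "p \<le> D" "(\<lambda>i. D i - p i) = n"
  then have "p i \<le> D i" by (simp add: le_fun_def)
  moreover have "n i = D i - p i" using a(2) by auto
  ultimately show "D i = p i + n i" by simp
qed

lemma sub_add: "(l::nat\<Rightarrow>nat) \<le> m \<Longrightarrow> m \<le> D \<Longrightarrow> (\<lambda>i. (m i - l i) + (D i - m i)) = (\<lambda>i. D i - l i)"
proof (rule ext)
  fix i assume "l \<le> m" "m \<le> D"
  then have "l i \<le> m i" "m i \<le> D i" by (simp_all add: le_fun_def)
  then show "(m i - l i) + (D i - m i) = D i - l i" by simp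
qed

lemma add_sub: "(n::nat\<Rightarrow>nat) \<le> p \<Longrightarrow> (\<lambda>i. n i + (p i - n i)) = p"
proof (rule ext)
  fix i assume "n \<le> p"
  then have "n i \<le> p i" by (simp add: le_fun_def)
  then show "n i + (p i - n i) = p i" by simp
qed

context
  fixes k Lam r s cmp d
  assumes K: "kgraph k Lam r s cmp d"
begin

lemma K_rs: "x \<in> Lam \<Longrightarrow> r x \<in> Lam \<and> s x \<in> Lam"
  using K[unfolded kgraph_def, THEN conjunct2, THEN conjunct1] by blast
lemma K_idem: "x \<in> Lam \<Longrightarrow> r (r x) = r x \<and> s (r x) = r x \<and> r (s x) = s x \<and> s (s x) = s x"
  using K[unfolded kgraph_def, THEN conjunct2, THEN conjunct2, THEN conjunct1] by blast
lemma K_unit: "x \<in> Lam \<Longrightarrow> cmp (r x) x = x \<and> cmp x (s x) = x"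
  using K[unfolded kgraph_def, THEN conjunct2, THEN conjunct2, THEN conjunct2, THEN conjunct1] by blast
lemma K_cmp: "x \<in> Lam \<Longrightarrow> y \<in> Lam \<Longrightarrow> s x = r y \<Longrightarrow>
        cmp x y \<in> Lam \<and> r (cmp x y) = r x \<and> s (cmp x y) = s y"
  using K[unfolded kgraph_def, THEN conjunct2, THEN conjunct2, THEN conjunct2, THEN conjunct2, THEN conjunct1] by blast
lemma K_assoc: "x \<in> Lam \<Longrightarrow> y \<in> Lam \<Longrightarrow> z \<in> Lam \<Longrightarrow> s x = r y \<Longrightarrow> s y = r z \<Longrightarrow>
        cmp (cmp x y) z = cmp x (cmp y z)"
  using K[unfolded kgraph_def, THEN conjunct2, THEN conjunct2, THEN conjunct2, THEN conjunct2, THEN conjunct2, THEN conjunct1] by blast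
lemma K_d0: "x \<in> Lam \<Longrightarrow> d (r x) = (\<lambda>i. 0) \<and> d (s x) = (\<lambda>i. 0)"
  using K[unfolded kgraph_def, THEN conjunct2, THEN conjunct2, THEN conjunct2, THEN conjunct2, THEN conjunct2, THEN conjunct2, THEN conjunct2, THEN conjunct1] by blast
lemma K_dcmp: "x \<in> Lam \<Longrightarrow> y \<in> Lam \<Longrightarrow> s x = r y \<Longrightarrow> d (cmp x y) = (\<lambda>i. d x i + d y i)"
  using K[unfolded kgraph_def, THEN conjunct2, THEN conjunct2, THEN conjunct2, THEN conjunct2, THEN conjunct2, THEN conjunct2, THEN conjunct2, THEN conjunct2, THEN conjunct1] by blast
lemma K_fact: "x \<in> Lam \<Longrightarrow> d x = (\<lambda>i. m i + n i) \<Longrightarrow>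
        (\<exists>!(mu, nu). mu \<in> Lam \<and> nu \<in> Lam \<and> d mu = m \<and> d nu = n \<and>
                      s mu = r nu \<and> x = cmp mu nu)"
  using K[unfolded kgraph_def, THEN conjunct2, THEN conjunct2, THEN conjunct2, THEN conjunct2, THEN conjunct2, THEN conjunct2, THEN conjunct2, THEN conjunct2, THEN conjunct2] by blast

lemma fact_ex:
  assumes "x \<in> Lam" "d x = (\<lambda>i. m i + n i)"
  obtains mu nu where "mu \<in> Lam" "nu \<in> Lam" "d mu = m" "d nu = n" "s mu = r nu" "x = cmp mu nu"
  using K_fact[OF assms] by auto

lemma fact_uniq:
  assumes "x \<in> Lam" "d x = (\<lambda>i. m i + n i)"
    and "mu \<in> Lam" "nu \<in> Lam" "d mu = m" "d nu = n" "s mu = r nu" "x = cmp mu nu"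
    and "mu' \<in> Lam" "nu' \<in> Lam" "d mu' = m" "d nu' = n" "s mu' = r nu'" "x = cmp mu' nu'"
  shows "mu = mu' \<and> nu = nu'"
proof -
  let ?Q = "\<lambda>z. case z of (mu, nu) \<Rightarrow> mu \<in> Lam \<and> nu \<in> Lam \<and> d mu = m \<and> d nu = n \<and>
                      s mu = r nu \<and> x = cmp mu nu"
  have E: "\<exists>!z. ?Q z" using K_fact[OF assms(1,2)] .
  have q1: "?Q (mu, nu)" using assms by simp
  have q2: "?Q (mu', nu')" using assms by simp
  have "(THE z. ?Q z) = (mu, nu)" by (rule the1_equality[OF E q1])
  moreover have "(THE z. ?Q z) = (mu', nu')" by (rule the1_equality[OF E q2])
  ultimately show ?thesis by simp
qed

definition P where
  "P x l m nu \<longleftrightarrow> nu \<in> Lam \<and> d nu = (\<lambda>i. m i - l i) \<and>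
     (\<exists>a b. a \<in> Lam \<and> b \<in> Lam \<and> d a = l \<and> d b = (\<lambda>i. d x i - m i) \<and>
            s a = r nu \<and> s nu = r b \<and> x = cmp a (cmp nu b))"

lemma seg_P:
  assumes x: "x \<in> Lam" and lm: "l \<le> m" and md: "m \<le> d x"
  shows "P x l m (seg Lam r s cmp d x l m)"
proof -
  have sa: "(\<lambda>i. (m i - l i) + (d x i - m i)) = (\<lambda>i. d x i - l i)" using sub_add[OF lm md] .
  have ex: "\<exists>nu. P x l m nu"
  proof -
    have dd: "d x = (\<lambda>i. l i + (d x i - l i))" using le_split[OF lm md] .
    obtain a y where a: "a \<in> Lam" "y \<in> Lam" "d a = l" "d y = (\<lambda>i. d x i - l i)" "s a = r y" "x = cmp a y"
      by (rule fact_ex[OF x dd])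
    have dy: "d y = (\<lambda>i. (m i - l i) + (d x i - m i))" using a(4) sa by simp
    obtain nu b where b: "nu \<in> Lam" "b \<in> Lam" "d nu = (\<lambda>i. m i - l i)" "d b = (\<lambda>i. d x i - m i)" "s nu = r b" "y = cmp nu b"
      by (rule fact_ex[OF a(2) dy])
    have "s a = r nu" using K_cmp[OF b(1,2,5)] a(5) b(6) by simp
    then show ?thesis unfolding P_def using a b by blast
  qed
  have un: "nu = nu'" if H1: "P x l m nu" and H2: "P x l m nu'" for nu nu'
  proof -
    obtain a b where ab: "a \<in> Lam" "b \<in> Lam" "d a = l" "d b = (\<lambda>i. d x i - m i)"
            "s a = r nu" "s nu = r b" "x = cmp a (cmp nu b)" "nu \<in> Lam" "d nu = (\<lambda>i. m i - l i)"
      using H1 unfolding P_def by blast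
    obtain a' b' where ab': "a' \<in> Lam" "b' \<in> Lam" "d a' = l" "d b' = (\<lambda>i. d x i - m i)"
            "s a' = r nu'" "s nu' = r b'" "x = cmp a' (cmp nu' b')" "nu' \<in> Lam" "d nu' = (\<lambda>i. m i - l i)"
      using H2 unfolding P_def by blast
    have dd: "d x = (\<lambda>i. l i + (d x i - l i))" using le_split[OF lm md] .
    have c1: "cmp nu b \<in> Lam" "r (cmp nu b) = r nu" "d (cmp nu b) = (\<lambda>i. (m i - l i) + (d x i - m i))"
      using K_cmp[OF ab(8,2,6)] K_dcmp[OF ab(8,2,6)] ab(4,9) by auto
    have c2: "cmp nu' b' \<in> Lam" "r (cmp nu' b') = r nu'" "d (cmp nu' b') = (\<lambda>i. (m i - l i) + (d x i - m i))"
      using K_cmp[OF ab'(8,2,6)] K_dcmp[OF ab'(8,2,6)] ab'(4,9) by auto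
    have c1d: "d (cmp nu b) = (\<lambda>i. d x i - l i)" using c1(3) sa by simp
    have c2d: "d (cmp nu' b') = (\<lambda>i. d x i - l i)" using c2(3) sa by simp
    have s1: "s a = r (cmp nu b)" using ab(5) c1(2) by simp
    have s2: "s a' = r (cmp nu' b')" using ab'(5) c2(2) by simp
    have eq: "cmp nu b = cmp nu' b'"
      using fact_uniq[OF x dd ab(1) c1(1) ab(3) c1d s1 ab(7) ab'(1) c2(1) ab'(3) c2d s2 ab'(7)] by simp
    show ?thesis
      using fact_uniq[OF c1(1,3) ab(8,2,9,4,6) refl ab'(8,2,9,4,6) eq] by simp
  qed
  have E: "\<exists>!nu. P x l m nu" using ex un by blast
  have "P x l m (THE nu. P x l m nu)" by (rule theI'[OF E])
  moreover have "seg Lam r s cmp d x l m = (THE nu. P x l m nu)"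
    unfolding seg_def P_def ..
  ultimately show ?thesis by simp
qed

lemma shape:
  assumes x: "x \<in> Lam" and px: "p \<le> d x" and dn: "(\<lambda>i. d x i - p i) = n"
    and v: "v \<in> Lam" "d v = p" and w: "w \<in> Lam" "d w = p"
    and rv: "seg Lam r s cmp d x (\<lambda>i. 0) p = v"
    and sw: "seg Lam r s cmp d x (\<lambda>i. d x i - p i) (d x) = w"
  shows "\<exists>b. b \<in> Lam \<and> d b = n \<and> s v = r b \<and> x = cmp v b"
    and "\<exists>c. c \<in> Lam \<and> d c = n \<and> s c = r w \<and> x = cmp c w"
proof -
  have dx: "d x = (\<lambda>i. p i + n i)" using dx_split[OF px dn] .
  have z: "(\<lambda>i. 0::nat) \<le> p" by (simp add: le_fun_def)
  have "P x (\<lambda>i. 0) p v" using seg_P[OF x z px] rv by simp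
  then obtain a b where ab: "a \<in> Lam" "b \<in> Lam" "d a = (\<lambda>i. 0)" "d b = (\<lambda>i. d x i - p i)"
      "s a = r v" "s v = r b" "x = cmp a (cmp v b)"
    unfolding P_def by blast
  have db: "d b = n" using ab(4) dn by simp
  have vb: "cmp v b \<in> Lam" "r (cmp v b) = r v" "d (cmp v b) = (\<lambda>i. p i + n i)"
    using K_cmp[OF v(1) ab(2,6)] K_dcmp[OF v(1) ab(2,6)] v(2) db by auto
  have vbd: "d (cmp v b) = d x" using vb(3) dx by simp
  have dx0: "d x = (\<lambda>i. 0 + d x i)" by simp
  have s1: "s a = r (cmp v b)" using ab(5) vb(2) by simp
  have rx: "r x \<in> Lam" "d (r x) = (\<lambda>i. 0)" "s (r x) = r x" "x = cmp (r x) x"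
    using K_rs[OF x] K_d0[OF x] K_idem[OF x] K_unit[OF x] by auto
  have "a = r x \<and> cmp v b = x"
    using fact_uniq[OF x dx0 ab(1) vb(1) ab(3) vbd s1 ab(7) rx(1) x rx(2) refl rx(3,4)] .
  then show "\<exists>b. b \<in> Lam \<and> d b = n \<and> s v = r b \<and> x = cmp v b" using ab(2,6) db by auto
  have le2: "(\<lambda>i. d x i - p i) \<le> d x" by (simp add: le_fun_def)
  have "P x (\<lambda>i. d x i - p i) (d x) w" using seg_P[OF x le2 order_refl] sw by simp
  then obtain c e where ce: "c \<in> Lam" "e \<in> Lam" "d c = (\<lambda>i. d x i - p i)" "d e = (\<lambda>i. d x i - d x i)"
      "s c = r w" "s w = r e" "x = cmp c (cmp w e)"
    unfolding P_def by blast
  have dc: "d c = n" using ce(3) dn by simp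
  have de: "d e = (\<lambda>i. 0)" using ce(4) by simp
  have we: "cmp w e \<in> Lam" "d (cmp w e) = (\<lambda>i. p i + 0)"
    using K_cmp[OF w(1) ce(2,6)] K_dcmp[OF w(1) ce(2,6)] w(2) de by auto
  have dwe: "d (cmp w e) = p" using we(2) by simp
  have se: "s (cmp w e) \<in> Lam" "d (s (cmp w e)) = (\<lambda>i. 0)" "s (cmp w e) = r (s (cmp w e))"
      "cmp w e = cmp (cmp w e) (s (cmp w e))"
    using K_rs[OF we(1)] K_d0[OF we(1)] K_idem[OF we(1)] K_unit[OF we(1)] by auto
  have "w = cmp w e \<and> e = s (cmp w e)"
    using fact_uniq[OF we(1,2) w(1) ce(2) w(2) de ce(6) refl we(1) se(1) dwe se(2,3,4)] .
  then have "cmp w e = w" by simp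
  then show "\<exists>c. c \<in> Lam \<and> d c = n \<and> s c = r w \<and> x = cmp c w" using ce(1,5,7) dc by auto
qed

lemma unique_b:
  assumes x: "x \<in> Lam" and px: "p \<le> d x" and dn: "(\<lambda>i. d x i - p i) = n" and np: "n \<le> p"
    and v: "v \<in> Lam" "d v = p" and w: "w \<in> Lam" "d w = p"
    and w12: "w1 \<in> Lam" "w2 \<in> Lam" "d w1 = (\<lambda>i. p i - n i)" "d w2 = n" "s w1 = r w2" "w = cmp w1 w2"
    and rv: "seg Lam r s cmp d x (\<lambda>i. 0) p = v"
    and sw: "seg Lam r s cmp d x (\<lambda>i. d x i - p i) (d x) = w"
  shows "x = cmp v w2"
proof -
  have dx: "d x = (\<lambda>i. p i + n i)" using dx_split[OF px dn] .
  obtain b where b: "b \<in> Lam" "d b = n" "s v = r b" "x = cmp v b"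
    using shape(1)[OF x px dn v w rv sw] by blast
  obtain c where c: "c \<in> Lam" "d c = n" "s c = r w" "x = cmp c w"
    using shape(2)[OF x px dn v w rv sw] by blast
  have rw: "r w = r w1" using K_cmp[OF w12(1,2,5)] w12(6) by simp
  have scw: "s c = r w1" using c(3) rw by simp
  have cw1: "cmp c w1 \<in> Lam" "s (cmp c w1) = s w1" "d (cmp c w1) = (\<lambda>i. n i + (p i - n i))"
    using K_cmp[OF c(1) w12(1) scw] K_dcmp[OF c(1) w12(1) scw] c(2) w12(3) by auto
  have cw1d: "d (cmp c w1) = p" using cw1(3) add_sub[OF np] by simp
  have xe: "x = cmp (cmp c w1) w2"
    using c(4) w12(6) K_assoc[OF c(1) w12(1,2) scw w12(5)] by simp
  have s2: "s (cmp c w1) = r w2" using cw1(2) w12(5) by simp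
  have "v = cmp c w1 \<and> b = w2"
    using fact_uniq[OF x dx v(1) b(1) v(2) b(2,3,4) cw1(1) w12(2) cw1d w12(4) s2 xe] .
  then show ?thesis using b by simp
qed

end

theorem lemma3p7:

  fixes Lam :: "'a set" and r s :: "'a \<Rightarrow> 'a" and cmp :: "'a \<Rightarrow> 'a \<Rightarrow> 'a"
    and d :: "'a \<Rightarrow> nat \<Rightarrow> nat" and k :: nat and p n :: "nat \<Rightarrow> nat" and v w :: 'a
  assumes "kgraph k Lam r s cmp d"
    and "in_Nk k p" and "in_Nk k n" and "n \<le> p"
    and "v \<in> dual_vertices Lam d p" and "w \<in> dual_vertices Lam d p"
  shows "\<forall>x\<in>dual_paths Lam d p. \<forall>y\<in>dual_paths Lam d p.
            dual_d d p x = n \<and> dual_r Lam r s cmp d p x = v \<and> dual_s Lam r s cmp d p x = w \<and>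
            dual_d d p y = n \<and> dual_r Lam r s cmp d p y = v \<and> dual_s Lam r s cmp d p y = w
            \<longrightarrow> x = y"
proof (intro ballI impI)
  fix x y assume x: "x \<in> dual_paths Lam d p" and y: "y \<in> dual_paths Lam d p"
    and H: "dual_d d p x = n \<and> dual_r Lam r s cmp d p x = v \<and> dual_s Lam r s cmp d p x = w \<and>
            dual_d d p y = n \<and> dual_r Lam r s cmp d p y = v \<and> dual_s Lam r s cmp d p y = w"
  have v: "v \<in> Lam" "d v = p" and w: "w \<in> Lam" "d w = p"
    using assms(5,6) unfolding dual_vertices_def by auto
  have dw: "d w = (\<lambda>i. (p i - n i) + n i)" using w(2) add_sub[OF assms(4)] by (simp add: add.commute)
  obtain w1 w2 where w12: "w1 \<in> Lam" "w2 \<in> Lam" "d w1 = (\<lambda>i. p i - n i)" "d w2 = n"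
      "s w1 = r w2" "w = cmp w1 w2"
    by (rule fact_ex[OF assms(1) w(1) dw])
  have "x = cmp v w2"
    using unique_b[OF assms(1), of x p n v w w1 w2] x H v w w12 assms(4)
    unfolding dual_paths_def dual_d_def dual_r_def dual_s_def by auto
  moreover have "y = cmp v w2"
    using unique_b[OF assms(1), of y p n v w w1 w2] y H v w w12 assms(4)
    unfolding dual_paths_def dual_d_def dual_r_def dual_s_def by auto
  ultimately show "x = y" by simp
qed


end
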